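(* Let $h>0$ and let $T^{\rm H}=\left[-\frac{\pi}{2},\frac{3\pi}{2}\right)^2\setminus\left[-\frac{\pi}{2},\frac{\pi}{2}\right)^2$. Let $\widetilde{A}_h(\boldsymbol\theta)=\frac{2}{h^2}(2-\cos\theta_1-\cos\theta_2)$ be the symbol of the 2D 5-point Laplacian stencil $\frac{1}{h^2}\begin{bmatrix} & -1 & \\ -1 & 4 & -1\\ & -1 & \end{bmatrix}$. For $\alpha,\beta,\gamma\in\mathbb R$ let $\Upsilon(\alpha,\beta,\gamma)=h^2\begin{bmatrix}\gamma&\beta&\gamma\\ \beta&\alpha&\beta\\ \gamma&\beta&\gamma\end{bmatrix}$ be the symmetric 9-point stencil with symbol $\widetilde{\Upsilon}(\boldsymbol\theta)=h^2(\alpha+2\beta\cos\theta_1+2\beta\cos\theta_2+4\gamma\cos\theta_1\cos\theta_2)$, and for $\omega\in\mathbb R$ define the smoothing factor $$\mu_{\rm loc}(\alpha,\beta,\gamma,\omega)=\max_{\boldsymbol\theta\in T^{\rm H}}\left|1-\omega\,\widetilde{A}_h(\boldsymbol\theta)\widetilde{\Upsilon}(\boldsymbol\theta)\right|.$$ Then among all symmetric 9-point stencils of the form $\Upsilon(\alpha,\beta,\gamma)$, the SPAI smoother $M_9=\frac{1}{24}\Upsilon(44,10,3)$ gives the optimal smoothing factor: $\min_{\alpha,\beta,\gamma,\omega\in\mathbb R}\mu_{\rm loc}(\alpha,\beta,\gamma,\omega)=\frac{9+8\sqrt{10}}{215}\approx0.1595$, and this minimum is attained for $(\alpha,\beta,\gamma)=(\frac{44}{24},\frac{10}{24},\frac{3}{24})$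 with the optimal relaxation parameter $\omega_{\rm opt}=\frac{309-12\sqrt{10}}{1720}\approx0.1576$.
   Context: This concerns the smoother (relaxation) $u^{k+1}=u^k+\omega M(b-Au^k)$ for the standard 5-point finite difference discretization $A_h$ of $-\Delta$ with mesh size $h$ in 2D, with relaxation error operator $I-\omega MA_h$. Its local Fourier (LFA) smoothing factor is the maximum over the high-frequency set $T^{\rm H}$ (for standard coarsening) of the modulus of the symbol $1-\omega\widetilde{A}_h(\boldsymbol\theta)\widetilde{M}(\boldsymbol\theta)$, where $\widetilde{M}$ is the symbol of the stencil $M$; the optimal smoothing factor is the minimum of this over the free parameters. *)

theory Defs
  imports Complex_Main
begin

definition TH :: "(real \<times> real) set" where
  "TH = ({-pi/2..<3*pi/2} \<times> {-pi/2..<3*pi/2}) - ({-pi/2..<pi/2} \<times> {-pi/2..<pi/2})"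

definition A_sym :: "real \<Rightarrow> real \<times> real \<Rightarrow> real" where
  "A_sym h \<theta> = 2 / h^2 * (2 - cos (fst \<theta>) - cos (snd \<theta>))"

definition Ups_sym :: "real \<Rightarrow> real \<Rightarrow> real \<Rightarrow> real \<Rightarrow> real \<times> real \<Rightarrow> real" where
  "Ups_sym h \<alpha> \<beta> \<gamma> \<theta> = h^2 * (\<alpha> + 2*\<beta>*cos (fst \<theta>) + 2*\<beta>*cos (snd \<theta>)
      + 4*\<gamma>*cos (fst \<theta>)*cos (snd \<theta>))"

definition mu_loc :: "real \<Rightarrow> real \<Rightarrow> real \<Rightarrow> real \<Rightarrow> real \<Rightarrow> real" where
  "mu_loc h \<alpha> \<beta> \<gamma> \<omega> = (SUP \<theta>\<in>TH. \<bar>1 - \<omega> * A_sym h \<theta> * Ups_sym h \<alpha> \<beta> \<gamma> \<theta>\<bar>)"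

end

theory Submission imports Defs begin

definition FF :: "real \<Rightarrow> real \<Rightarrow> real \<Rightarrow> real \<Rightarrow> real \<Rightarrow> real" where
  "FF a b g x y = 2*(2-x-y)*(a + 2*b*x + 2*b*y + 4*g*x*y)"

lemma comb:
  fixes l1 l2 l3 x1 x2 x3 x4 M S :: real
  assumes "l1*x1 \<le> l1*M" "l2*x2 \<le> l2*M" "l3*x3 \<le> l3*M" "-x4 \<le> M" "l1+l2+l3 = S"
    "l1*x1+l2*x2+l3*x3 - x4 = (l1+l2+l3) - 1"
  shows "S - 1 \<le> (S+1)*M"
proof -
  have "(S+1)*M = l1*M+l2*M+l3*M+M" unfolding assms(5)[symmetric] by (simp add: algebra_simps)
  thus ?thesis using assms by linarith
qed

lemma lower_alg:
  fixes r :: real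
  assumes r2: "r*r = 10" and r3: "r > 3" and r4: "r < 16/5"
  and t: "t = (-7 + 2*r)/9"
  and h1: "\<bar>1 - w * FF a b g 0 1\<bar> \<le> M"
  and h2: "\<bar>1 - w * FF a b g (-1) (-1)\<bar> \<le> M"
  and h3: "\<bar>1 - w * FF a b g (-1) 1\<bar> \<le> M"
  and h4: "\<bar>1 - w * FF a b g t t\<bar> \<le> M"
  shows "(9 + 8*r)/215 \<le> M"
proof -
  define l1 where "l1 = (544 + 40*r)/729"
  define l2 where "l2 = (752 - 202*r)/729"
  define l3 where "l3 = (-160 + 74*r)/243"
  have p1: "l1 \<ge> 0" "l2 \<ge> 0" "l3 \<ge> 0" using r3 r4 by (auto simp: l1_def l2_def l3_def)
  have idg: "\<And>t. ((1-t)^3+4*((1-t)*t)) * (1 - w * FF a b g 0 1) + ((1-t)^3/8) * (1 - w * FF a b g (-1) (-1)) + ((1-t)^3/4 - (1-t)*t^2) * (1 - w * FF a b g (-1) 1)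
     - (1 - w * FF a b g t t) = ((1-t)^3+4*((1-t)*t)) + ((1-t)^3/8) + ((1-t)^3/4 - (1-t)*t^2) - 1"
    unfolding FF_def by algebra
  have t9: "9*t = -7 + 2*r" using t by simp
  have u: "1 - t = (16 - 2*r)/9" unfolding t by (simp add: field_simps)
  have q1: "(16-2*r)*(16-2*r) = 296 - 64*r" proof -
    have "(16-2*r)*(16-2*r) = 256 - 64*r + 4*(r*r)" by algebra
    thus ?thesis using r2 by simp qed
  have q2: "(16-2*r)*(16-2*r)*(16-2*r) = 6016 - 1616*r" proof -
    have "(16-2*r)*(16-2*r)*(16-2*r) = (296 - 64*r)*(16-2*r)" using q1 by simp
    also have "\<dots> = 4736 - 1616*r + 128*(r*r)" by algebra
    finally show ?thesis using r2 by simp qed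
  have q3: "(16-2*r)*(-7+2*r) = -152 + 46*r" proof -
    have "(16-2*r)*(-7+2*r) = -112 + 46*r - 4*(r*r)" by algebra
    thus ?thesis using r2 by simp qed
  have q4: "(16-2*r)*((-7+2*r)*(-7+2*r)) = 1984 - 626*r" proof -
    have "(-7+2*r)*(-7+2*r) = 49 - 28*r + 4*(r*r)" by algebra
    hence "(-7+2*r)*(-7+2*r) = 89 - 28*r" using r2 by simp
    hence "(16-2*r)*((-7+2*r)*(-7+2*r)) = (16-2*r)*(89 - 28*r)" by simp
    also have "\<dots> = 1424 - 626*r + 56*(r*r)" by algebra
    finally show ?thesis using r2 by simp qed
  have c3: "(1-t)^3 = (6016 - 1616*r)/729" unfolding u using q2 by (simp add: power3_eq_cube)
  have c4: "(1-t)*t = (-152 + 46*r)/81" proof -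
    have "(1-t)*t = ((16 - 2*r)/9)*((-7 + 2*r)/9)" by (simp only: u) (simp only: t)
    thus ?thesis using q3 by simp qed
  have c5: "(1-t)*t^2 = (1984 - 626*r)/729" proof -
    have "(1-t)*t^2 = ((16 - 2*r)/9)*(((-7 + 2*r)/9)*((-7 + 2*r)/9))" unfolding power2_eq_square by (simp only: u) (simp only: t)
    thus ?thesis using q4 by simp qed
  have e1: "l1 = (1-t)^3+4*((1-t)*t)" unfolding l1_def c3 c4 by (simp add: field_simps)
  have e2: "l2 = (1-t)^3/8" unfolding l2_def c3 by (simp add: field_simps)
  have e3: "l3 = (1-t)^3/4 - (1-t)*t^2" unfolding l3_def c3 c5 by (simp add: field_simps)
  have id: "l1 * (1 - w * FF a b g 0 1) + l2 * (1 - w * FF a b g (-1) (-1)) + l3 * (1 - w * FF a b g (-1) 1)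
     - (1 - w * FF a b g t t) = (l1+l2+l3) - 1"
    unfolding e1 e2 e3 by (rule idg)
  have "l1 * (1 - w * FF a b g 0 1) \<le> l1 * M" using h1 p1 by (intro mult_left_mono) auto
  moreover have "l2 * (1 - w * FF a b g (-1) (-1)) \<le> l2 * M" using h2 p1 by (intro mult_left_mono) auto
  moreover have "l3 * (1 - w * FF a b g (-1) 1) \<le> l3 * M" using h3 p1 by (intro mult_left_mono) auto
  moreover have "- (1 - w * FF a b g t t) \<le> M" using h4 by auto
  moreover have "l1 + l2 + l3 = (272 + 20*r)/243" unfolding l1_def l2_def l3_def by (simp add: field_simps)
  ultimately have le: "(272 + 20*r)/243 - 1 \<le> ((272 + 20*r)/243 + 1) * M"
    using id by (rule comb)
  have eq: "((272 + 20*r)/243 + 1) * ((9 + 8*r)/215) = (272 + 20*r)/243 - 1"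
  proof -
    have k: "(9+8*r)*(515+20*r) = (29+20*r)*215" proof- have "(9+8*r)*(515+20*r) = 4635 + 4300*r + 160*(r*r)" by algebra
       thus ?thesis using r2 by simp qed
    have "((272 + 20 * r) / 243 + 1) * ((9 + 8 * r) / 215) = ((9+8*r)*(515+20*r))/(215*243)" by (simp add: field_simps)
    also have "\<dots> = (272 + 20 * r) / 243 - 1" unfolding k by (simp add: field_simps)
    finally show ?thesis .
  qed
  have pos: "(272 + 20*r)/243 + 1 > 0" using r3 by (simp add: field_simps)
  have "((272 + 20*r)/243 + 1) * ((9 + 8*r)/215) \<le> ((272 + 20*r)/243 + 1) * M" unfolding eq by (rule le)
  thus ?thesis using mult_le_cancel_left_pos[OF pos] by blast
qed

lemma upper_alg:
  fixes x y :: real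
  assumes "-1 \<le> x" "x \<le> 0" "-1 \<le> y" "y \<le> 1"
  shows "32 \<le> (2-x-y)*(22+10*(x+y)+6*x*y)"
proof -
  have e: "(2-x-y)*(22+10*(x+y)+6*x*y) - 32 = (1+y)/2*(-16*x*(1+x)) + (1-y)/2*(4-4*x*x) + (10+6*x)*((1-y)*(1+y))"
    by algebra
  have "0 \<le> (-x)*(1+x)" by (rule mult_nonneg_nonneg) (use assms in auto)
  moreover have "-16*x*(1+x) = 16*((-x)*(1+x))" by algebra
  ultimately have "0 \<le> -16*x*(1+x)" by linarith
  hence n1: "0 \<le> (1+y)/2*(-16*x*(1+x))" using assms by (intro mult_nonneg_nonneg[of "(1+y)/2"]) auto
  have "0 \<le> (1-x)*(1+x)" by (rule mult_nonneg_nonneg) (use assms in auto)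
  hence "x*x \<le> 1" by (simp add: algebra_simps)
  have "0 \<le> (1-y)/2*(4-4*x*x)" using assms \<open>x*x \<le> 1\<close> by (intro mult_nonneg_nonneg) auto
  moreover have "0 \<le> (10+6*x)*((1-y)*(1+y))" using assms by (intro mult_nonneg_nonneg) auto
  ultimately show ?thesis using e n1 by linarith
qed

lemma upper_alg2:
  fixes x y r :: real
  assumes r2: "r*r = 10" and r3: "r > 3" and r4: "r < 16/5"
  and "-1 \<le> x" "x \<le> 1" "-1 \<le> y" "y \<le> 1"
  shows "(2-x-y)*(22+10*(x+y)+6*x*y) \<le> (8704 + 640*r)/243"
proof -
  define t where "t = (x+y)/2"
  define ts where "ts = (-7 + 2*r)/9"
  have "6*t*t - 6*x*y = 3/2*((x-y)*(x-y))" unfolding t_def by algebra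
  moreover have "0 \<le> (x-y)*(x-y)" by simp
  ultimately have "6*x*y \<le> 6*t*t" by linarith
  hence a: "(2-x-y)*(22+10*(x+y)+6*x*y) \<le> (2-x-y)*(22+10*(x+y)+6*t*t)"
    using assms by (intro mult_left_mono) auto
  have b: "(2-x-y)*(22+10*(x+y)+6*t*t) = 2*(22 - 2*t - 14*t*t - 6*t*t*t)" unfolding t_def
    by algebra
  define P where "P = 9*ts*ts + 14*ts + 1"
  have "9*P = (9*ts)*(9*ts) + 14*(9*ts) + 9" unfolding P_def by algebra
  also have "9*ts = -7 + 2*r" unfolding ts_def by simp
  also have "(-7 + 2*r)*(-7 + 2*r) = 49 - 28*r + 4*(r*r)" by algebra
  finally have "P = 0" using r2 by simp
  have g1: "22 - 2*ts - 14*ts*ts - 6*ts*ts*ts = 608/27 + 160/27*ts - (2/3*ts+14/27)*P"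
    unfolding P_def by algebra
  have g2: "2*(22 - 2*ts - 14*ts*ts - 6*ts*ts*ts) = (8704 + 640*r)/243"
  proof -
    have "2*(22 - 2*ts - 14*ts*ts - 6*ts*ts*ts) = 2*(608/27 + 160/27*ts)" unfolding g1 \<open>P = 0\<close> by simp
    also have "\<dots> = (8704 + 640*r)/243" unfolding ts_def by (simp add: field_simps)
    finally show ?thesis .
  qed
  have g3: "(22 - 2*ts - 14*ts*ts - 6*ts*ts*ts) - (22 - 2*t - 14*t*t - 6*t*t*t)
     = (t-ts)*(t-ts)*(6*t+12*ts+14) + (t-ts)*(2*P)" unfolding P_def by algebra
  have c: "(8704 + 640*r)/243 - 2*(22 - 2*t - 14*t*t - 6*t*t*t) = 2*((t-ts)*(t-ts)*(6*t+12*ts+14))"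
  proof -
    have g3': "(22 - 2*ts - 14*ts*ts - 6*ts*ts*ts) - (22 - 2*t - 14*t*t - 6*t*t*t)
     = (t-ts)*(t-ts)*(6*t+12*ts+14)" using g3 \<open>P = 0\<close> by simp
    show ?thesis by (subst g2[symmetric], subst g3'[symmetric]) (simp only: right_diff_distrib)
  qed
  have "0 \<le> 6*t+12*ts+14" unfolding ts_def t_def using assms by (simp add: field_simps)
  hence "0 \<le> 2*((t-ts)*(t-ts)*(6*t+12*ts+14))" by simp
  thus ?thesis using a b c by linarith
qed


lemma prod_eq:
  assumes "h > 0"
  shows "\<omega> * A_sym h \<theta> * Ups_sym h \<alpha> \<beta> \<gamma> \<theta> = \<omega> * FF \<alpha> \<beta> \<gamma> (cos (fst \<theta>)) (cos (snd \<theta>))"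
  using assms unfolding A_sym_def Ups_sym_def FF_def by (simp add: field_simps)

lemma FF_bound:
  fixes x y :: real
  assumes "\<bar>x\<bar> \<le> 1" "\<bar>y\<bar> \<le> 1"
  shows "\<bar>FF a b g x y\<bar> \<le> 8 * (\<bar>a\<bar> + 4*\<bar>b\<bar> + 4*\<bar>g\<bar>)"
proof -
  have bx: "\<bar>b*x\<bar> \<le> \<bar>b\<bar>" using assms by (simp add: abs_mult mult_left_le)
  have by': "\<bar>b*y\<bar> \<le> \<bar>b\<bar>" using assms by (simp add: abs_mult mult_left_le)
  have xy: "\<bar>x*y\<bar> \<le> 1" using assms by (simp add: abs_mult mult_le_one)
  have gxy: "\<bar>g*(x*y)\<bar> \<le> \<bar>g\<bar>" using xy by (simp add: abs_mult mult_left_le)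
  have s: "\<bar>a + 2*b*x + 2*b*y + 4*g*x*y\<bar> \<le> \<bar>a\<bar> + 4*\<bar>b\<bar> + 4*\<bar>g\<bar>"
  proof -
    have "a + 2*b*x + 2*b*y + 4*g*x*y = a + 2*(b*x) + 2*(b*y) + 4*(g*(x*y))" by (simp add: algebra_simps)
    moreover have "\<bar>a + 2*(b*x) + 2*(b*y) + 4*(g*(x*y))\<bar> \<le> \<bar>a\<bar> + 2*\<bar>b*x\<bar> + 2*\<bar>b*y\<bar> + 4*\<bar>g*(x*y)\<bar>"
      by (smt (verit) abs_mult abs_triangle_ineq abs_numeral)
    ultimately show ?thesis using bx by' gxy by linarith
  qed
  have t: "\<bar>2 - x - y\<bar> \<le> 4" using assms by linarith
  have "\<bar>FF a b g x y\<bar> = 2 * \<bar>2 - x - y\<bar> * \<bar>a + 2*b*x + 2*b*y + 4*g*x*y\<bar>"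
    unfolding FF_def abs_mult by simp
  also have "\<dots> \<le> 2 * 4 * (\<bar>a\<bar> + 4*\<bar>b\<bar> + 4*\<bar>g\<bar>)"
    using t s by (intro mult_left_mono mult_mono) auto
  finally show ?thesis by simp
qed

lemma bdd: "bdd_above ((\<lambda>\<theta>. \<bar>1 - \<omega> * FF \<alpha> \<beta> \<gamma> (cos (fst \<theta>)) (cos (snd \<theta>))\<bar>) ` S)"
proof (rule bdd_aboveI2)
  fix \<theta> :: "real \<times> real"
  have "\<bar>FF \<alpha> \<beta> \<gamma> (cos (fst \<theta>)) (cos (snd \<theta>))\<bar> \<le> 8 * (\<bar>\<alpha>\<bar> + 4*\<bar>\<beta>\<bar> + 4*\<bar>\<gamma>\<bar>)"
    by (rule FF_bound) auto
  hence "\<bar>\<omega> * FF \<alpha> \<beta> \<gamma> (cos (fst \<theta>)) (cos (snd \<theta>))\<bar> \<le> \<bar>\<omega>\<bar> * (8 * (\<bar>\<alpha>\<bar> + 4*\<bar>\<beta>\<bar> + 4*\<bar>\<gamma>\<bar>))"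
    by (simp add: abs_mult mult_left_mono)
  thus "\<bar>1 - \<omega> * FF \<alpha> \<beta> \<gamma> (cos (fst \<theta>)) (cos (snd \<theta>))\<bar> \<le> 1 + \<bar>\<omega>\<bar> * (8 * (\<bar>\<alpha>\<bar> + 4*\<bar>\<beta>\<bar> + 4*\<bar>\<gamma>\<bar>))"
    by linarith
qed

lemma mu_eq:
  assumes "h > 0"
  shows "mu_loc h \<alpha> \<beta> \<gamma> \<omega> = (SUP \<theta>\<in>TH. \<bar>1 - \<omega> * FF \<alpha> \<beta> \<gamma> (cos (fst \<theta>)) (cos (snd \<theta>))\<bar>)"
  unfolding mu_loc_def prod_eq[OF assms] ..

lemma mu_ge:
  assumes "h > 0" "\<theta> \<in> TH"
  shows "\<bar>1 - \<omega> * FF \<alpha> \<beta> \<gamma> (cos (fst \<theta>)) (cos (snd \<theta>))\<bar> \<le> mu_loc h \<alpha> \<beta> \<gamma> \<omega>"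
  unfolding mu_eq[OF assms(1)] by (rule cSUP_upper[OF assms(2) bdd])

lemma cos_nonpos: "pi/2 \<le> x \<Longrightarrow> x \<le> 3*pi/2 \<Longrightarrow> cos x \<le> 0"
proof -
  assume a: "pi/2 \<le> x" "x \<le> 3*pi/2"
  have "0 \<le> cos (x - pi)" by (rule cos_ge_zero) (use a in auto)
  moreover have "cos (x - pi) = - cos x" by (simp add: cos_diff)
  ultimately show ?thesis by simp
qed

lemma TH_cases:
  assumes "\<theta> \<in> TH"
  shows "(cos (fst \<theta>) \<le> 0 \<or> cos (snd \<theta>) \<le> 0)"
proof -
  obtain a b where ab: "\<theta> = (a, b)" by fastforce
  have "-pi/2 \<le> a" "a < 3*pi/2" "-pi/2 \<le> b" "b < 3*pi/2" "\<not> (a < pi/2 \<and> b < pi/2)"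
    using assms unfolding TH_def ab by auto
  then show ?thesis unfolding ab using cos_nonpos[of a] cos_nonpos[of b] by auto
qed

lemma mem_TH: "pi/2 \<le> a \<Longrightarrow> a < 3*pi/2 \<Longrightarrow> -pi/2 \<le> b \<Longrightarrow> b < 3*pi/2 \<Longrightarrow> (a, b) \<in> TH"
  unfolding TH_def by auto

theorem theorem3p1:
  fixes h :: real
  assumes "h > 0"
  shows "(\<forall>\<alpha> \<beta> \<gamma> \<omega>. mu_loc h \<alpha> \<beta> \<gamma> \<omega> \<ge> (9 + 8 * sqrt 10) / 215)
     \<and> mu_loc h (44/24) (10/24) (3/24) ((309 - 12 * sqrt 10) / 1720) = (9 + 8 * sqrt 10) / 215"
proof -
  define r where "r = sqrt 10"
  have r2: "r*r = 10" unfolding r_def by simp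
  have r3: "r > 3" unfolding r_def by (rule real_less_rsqrt) simp
  have r4: "r < 16/5" unfolding r_def by (rule real_less_lsqrt) (simp_all add: power2_eq_square)
  define t where "t = (-7 + 2*r)/9"
  have t1: "-1 \<le> t" "t \<le> 0" unfolding t_def using r3 r4 by auto
  have pi0: "pi > 0" by (rule pi_gt_zero)
  have th1: "(pi/2, 0) \<in> TH" by (rule mem_TH; use pi0 in linarith)
  have th2: "(pi, pi) \<in> TH" by (rule mem_TH; use pi0 in linarith)
  have th3: "(pi, 0) \<in> TH" by (rule mem_TH; use pi0 in linarith)
  have ac1: "pi/2 \<le> arccos t" using arccos_le_arccos[of t 0] t1 by simp
  have ac2: "arccos t \<le> pi" using arccos_ubound[of t] t1 by simp
  have th4: "(arccos t, arccos t) \<in> TH" by (rule mem_TH; use pi0 ac1 ac2 in linarith)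
  have ct: "cos (arccos t) = t" using t1 by simp
  have part1: "\<forall>\<alpha> \<beta> \<gamma> \<omega>. mu_loc h \<alpha> \<beta> \<gamma> \<omega> \<ge> (9 + 8 * r) / 215"
  proof (intro allI)
    fix \<alpha> \<beta> \<gamma> \<omega>
    show "mu_loc h \<alpha> \<beta> \<gamma> \<omega> \<ge> (9 + 8 * r) / 215"
    proof (rule lower_alg[OF r2 r3 r4 t_def])
      show "\<bar>1 - \<omega> * FF \<alpha> \<beta> \<gamma> 0 1\<bar> \<le> mu_loc h \<alpha> \<beta> \<gamma> \<omega>"
        using mu_ge[OF assms th1, of \<omega> \<alpha> \<beta> \<gamma>] by simp
      show "\<bar>1 - \<omega> * FF \<alpha> \<beta> \<gamma> (-1) (-1)\<bar> \<le> mu_loc h \<alpha> \<beta> \<gamma> \<omega>"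
        using mu_ge[OF assms th2, of \<omega> \<alpha> \<beta> \<gamma>] by simp
      show "\<bar>1 - \<omega> * FF \<alpha> \<beta> \<gamma> (-1) 1\<bar> \<le> mu_loc h \<alpha> \<beta> \<gamma> \<omega>"
        using mu_ge[OF assms th3, of \<omega> \<alpha> \<beta> \<gamma>] by simp
      show "\<bar>1 - \<omega> * FF \<alpha> \<beta> \<gamma> t t\<bar> \<le> mu_loc h \<alpha> \<beta> \<gamma> \<omega>"
        using mu_ge[OF assms th4, of \<omega> \<alpha> \<beta> \<gamma>] ct by simp
    qed
  qed
  define w where "w = (309 - 12 * r) / 1720"
  define mu where "mu = (9 + 8 * r) / 215"
  have w0: "w > 0" unfolding w_def using r4 by simp
  have k1: "w * 32 / 6 = 1 - mu" unfolding w_def mu_def by (simp add: field_simps)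
  have k2: "w * ((8704 + 640*r)/243) / 6 = 1 + mu"
  proof -
    have "(309 - 12 * r) * (8704 + 640*r) = 2612736 + 93312 * r" (is "?l = _")
    proof -
      have "?l = 2689536 + 93312 * r - 7680 * (r*r)" by algebra
      thus ?thesis using r2 by simp
    qed
    thus ?thesis unfolding w_def mu_def by (simp add: field_simps)
  qed
  have ff: "FF (44/24) (10/24) (3/24) x y = (2-x-y)*(22+10*(x+y)+6*x*y) / 6" for x y
    unfolding FF_def by (simp add: field_simps)
  have bnd: "\<bar>1 - w * FF (44/24) (10/24) (3/24) x y\<bar> \<le> mu"
    if "-1 \<le> x" "x \<le> 1" "-1 \<le> y" "y \<le> 1" "x \<le> 0 \<or> y \<le> 0" for x y
  proof -
    have lo: "32 \<le> (2-x-y)*(22+10*(x+y)+6*x*y)"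
    proof (cases "x \<le> 0")
      case True thus ?thesis using upper_alg that by auto
    next
      case False
      hence "y \<le> 0" using that by auto
      hence "32 \<le> (2-y-x)*(22+10*(y+x)+6*y*x)" using upper_alg that by auto
      thus ?thesis by (simp add: algebra_simps)
    qed
    have hi: "(2-x-y)*(22+10*(x+y)+6*x*y) \<le> (8704 + 640*r)/243"
      using upper_alg2[OF r2 r3 r4] that by auto
    have "w * 32 \<le> w * ((2-x-y)*(22+10*(x+y)+6*x*y))" using lo w0 by simp
    moreover have "w * ((2-x-y)*(22+10*(x+y)+6*x*y)) \<le> w * ((8704 + 640*r)/243)" using hi w0 by (intro mult_left_mono) auto
    ultimately show ?thesis unfolding ff using k1 k2 by (simp add: abs_le_iff)
  qed
  have part2: "mu_loc h (44/24) (10/24) (3/24) w \<le> mu"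
    unfolding mu_eq[OF assms]
  proof (rule cSUP_least)
    show "TH \<noteq> {}" using th1 by auto
  next
    fix \<theta> assume "\<theta> \<in> TH"
    thus "\<bar>1 - w * FF (44/24) (10/24) (3/24) (cos (fst \<theta>)) (cos (snd \<theta>))\<bar> \<le> mu"
      using TH_cases by (intro bnd) auto
  qed
  show ?thesis using part1 part2 unfolding r_def w_def mu_def
    by (meson order.antisym)
qed

end
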